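(* Let $(X,S)$ be an $S$-metric space and $r\ge0$. If a sequence $\{x_n\}$ in $X$ is statistically convergent to $x'\in X$, then $st\text{-}LIM^r x_n=B_S[x',r]$.
   Context: An $S$-metric on a nonempty set $X$ is a function $S:X^3\to[0,\infty)$ such that for all $x,y,z,a\in X$: $S(x,y,z)=0$ if and only if $x=y=z$, and $S(x,y,z)\le S(x,x,a)+S(y,y,a)+S(z,z,a)$. $B_S[x,r]=\{y\in X: S(y,y,x)\le r\}$. For $B\subset\mathbb N$ the natural density is $\delta(B)=\lim_{n\to\infty}\frac{|\{k\in B:k\le n\}|}{n}$ when the limit exists. $\{x_n\}$ is statistically convergent to $x'$ if for every $\varepsilon>0$, $\delta(\{n: S(x_n,x_n,x')\ge\varepsilon\})=0$. For $r\ge0$, $\{x_n\}$ is $r$-statistically convergent to $x$ if for every $\varepsilon>0$, $\delta(\{n\in\mathbb N: S(x_n,x_n,x)\ge r+\varepsilon\})=0$; $st\text{-}LIM^r x_n$ denotes the set of all such $x\in X$. *)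

theory Defs
  imports "HOL-Analysis.Analysis"
begin

definition S_metric :: "'a set \<Rightarrow> ('a \<Rightarrow> 'a \<Rightarrow> 'a \<Rightarrow> real) \<Rightarrow> bool" where
  "S_metric X S \<longleftrightarrow> X \<noteq> {} \<and>
     (\<forall>x\<in>X. \<forall>y\<in>X. \<forall>z\<in>X. S x y z \<ge> 0) \<and>
     (\<forall>x\<in>X. \<forall>y\<in>X. \<forall>z\<in>X. S x y z = 0 \<longleftrightarrow> x = y \<and> y = z) \<and>
     (\<forall>x\<in>X. \<forall>y\<in>X. \<forall>z\<in>X. \<forall>a\<in>X. S x y z \<le> S x x a + S y y a + S z z a)"

definition S_closed_ball :: "'a set \<Rightarrow> ('a \<Rightarrow> 'a \<Rightarrow> 'a \<Rightarrow> real) \<Rightarrow> 'a \<Rightarrow> real \<Rightarrow> 'a set" where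
  "S_closed_ball X S x r = {y \<in> X. S y y x \<le> r}"

definition has_natural_density :: "nat set \<Rightarrow> real \<Rightarrow> bool" where
  "has_natural_density B d \<longleftrightarrow>
     ((\<lambda>n. real (card {k \<in> B. 1 \<le> k \<and> k \<le> n}) / real n) \<longlongrightarrow> d) sequentially"

definition stat_convergent :: "('a \<Rightarrow> 'a \<Rightarrow> 'a \<Rightarrow> real) \<Rightarrow> (nat \<Rightarrow> 'a) \<Rightarrow> 'a \<Rightarrow> bool" where
  "stat_convergent S x x' \<longleftrightarrow>
     (\<forall>\<epsilon>>0. has_natural_density {n. 1 \<le> n \<and> S (x n) (x n) x' \<ge> \<epsilon>} 0)"

definition r_stat_convergent :: "('a \<Rightarrow> 'a \<Rightarrow> 'a \<Rightarrow> real) \<Rightarrow> real \<Rightarrow> (nat \<Rightarrow> 'a) \<Rightarrow> 'a \<Rightarrow> bool" where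
  "r_stat_convergent S r x y \<longleftrightarrow>
     (\<forall>\<epsilon>>0. has_natural_density {n. 1 \<le> n \<and> S (x n) (x n) y \<ge> r + \<epsilon>} 0)"

definition st_LIM :: "'a set \<Rightarrow> ('a \<Rightarrow> 'a \<Rightarrow> 'a \<Rightarrow> real) \<Rightarrow> real \<Rightarrow> (nat \<Rightarrow> 'a) \<Rightarrow> 'a set" where
  "st_LIM X S r x = {y \<in> X. r_stat_convergent S r x y}"

end

theory Submission
  imports Defs
begin

lemma dens_mono:
  assumes "has_natural_density B 0" "A \<subseteq> B"
  shows "has_natural_density A 0"
  unfolding has_natural_density_def
proof (rule tendsto_sandwich[where f="\<lambda>n. 0"])
  show "\<forall>\<^sub>F n in sequentially. 0 \<le> real (card {k \<in> A. 1 \<le> k \<and> k \<le> n}) / real n" by simp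
  show "\<forall>\<^sub>F n in sequentially. real (card {k \<in> A. 1 \<le> k \<and> k \<le> n}) / real n
      \<le> real (card {k \<in> B. 1 \<le> k \<and> k \<le> n}) / real n"
  proof (rule always_eventually, rule allI)
    fix n
    have "card {k \<in> A. 1 \<le> k \<and> k \<le> n} \<le> card {k \<in> B. 1 \<le> k \<and> k \<le> n}"
      by (rule card_mono) (use assms(2) in auto)
    then show "real (card {k \<in> A. 1 \<le> k \<and> k \<le> n}) / real n
      \<le> real (card {k \<in> B. 1 \<le> k \<and> k \<le> n}) / real n"
      by (simp add: divide_right_mono)
  qed
qed (use assms(1) in \<open>auto simp: has_natural_density_def\<close>)

lemma dens_union:
  assumes "has_natural_density A 0" "has_natural_density B 0"
  shows "has_natural_density (A \<union> B) 0"
  unfolding has_natural_density_def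
proof (rule tendsto_sandwich[where f="\<lambda>n. 0" and h="\<lambda>n. real (card {k \<in> A. 1 \<le> k \<and> k \<le> n}) / real n + real (card {k \<in> B. 1 \<le> k \<and> k \<le> n}) / real n"])
  show "\<forall>\<^sub>F n in sequentially. 0 \<le> real (card {k \<in> A \<union> B. 1 \<le> k \<and> k \<le> n}) / real n" by simp
  show "\<forall>\<^sub>F n in sequentially. real (card {k \<in> A \<union> B. 1 \<le> k \<and> k \<le> n}) / real n
      \<le> real (card {k \<in> A. 1 \<le> k \<and> k \<le> n}) / real n + real (card {k \<in> B. 1 \<le> k \<and> k \<le> n}) / real n"
  proof (rule always_eventually, rule allI)
    fix n
    have e: "{k \<in> A \<union> B. 1 \<le> k \<and> k \<le> n} = {k \<in> A. 1 \<le> k \<and> k \<le> n} \<union> {k \<in> B. 1 \<le> k \<and> k \<le> n}" by auto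
    have "card {k \<in> A \<union> B. 1 \<le> k \<and> k \<le> n} \<le> card {k \<in> A. 1 \<le> k \<and> k \<le> n} + card {k \<in> B. 1 \<le> k \<and> k \<le> n}"
      unfolding e by (rule card_Un_le)
    then have "real (card {k \<in> A \<union> B. 1 \<le> k \<and> k \<le> n}) \<le> real (card {k \<in> A. 1 \<le> k \<and> k \<le> n}) + real (card {k \<in> B. 1 \<le> k \<and> k \<le> n})"
      by linarith
    then show "real (card {k \<in> A \<union> B. 1 \<le> k \<and> k \<le> n}) / real n
      \<le> real (card {k \<in> A. 1 \<le> k \<and> k \<le> n}) / real n + real (card {k \<in> B. 1 \<le> k \<and> k \<le> n}) / real n"
      by (simp add: divide_right_mono flip: add_divide_distrib)
  qed
  show "(\<lambda>n. real (card {k \<in> A. 1 \<le> k \<and> k \<le> n}) / real n + real (card {k \<in> B. 1 \<le> k \<and> k \<le> n}) / real n) \<longlonglongrightarrow> 0"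
    using tendsto_add[OF assms[unfolded has_natural_density_def]] by simp
qed simp

lemma dens_not_all:
  assumes "has_natural_density A 0"
  shows "\<exists>n\<ge>1. n \<notin> A"
proof (rule ccontr)
  assume "\<not> ?thesis"
  then have all: "\<And>n. n \<ge> 1 \<Longrightarrow> n \<in> A" by auto
  have "\<forall>\<^sub>F n in sequentially. real (card {k \<in> A. 1 \<le> k \<and> k \<le> n}) / real n = 1"
  proof (rule eventually_sequentiallyI[of 1])
    fix n :: nat assume "1 \<le> n"
    have "{k \<in> A. 1 \<le> k \<and> k \<le> n} = {1..n}" using all by auto
    then show "real (card {k \<in> A. 1 \<le> k \<and> k \<le> n}) / real n = 1" using \<open>1 \<le> n\<close> by simp
  qed
  then have "(\<lambda>n. real (card {k \<in> A. 1 \<le> k \<and> k \<le> n}) / real n) \<longlonglongrightarrow> 1"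
    by (rule tendsto_eventually)
  moreover have "(\<lambda>n. real (card {k \<in> A. 1 \<le> k \<and> k \<le> n}) / real n) \<longlonglongrightarrow> 0"
    using assms by (simp add: has_natural_density_def)
  ultimately have "(1::real) = 0" by (rule LIMSEQ_unique)
  then show False by simp
qed

theorem theorem4p3:
  fixes X :: "'a set" and S :: "'a \<Rightarrow> 'a \<Rightarrow> 'a \<Rightarrow> real"
    and x :: "nat \<Rightarrow> 'a" and x' :: 'a and r :: real
  assumes "S_metric X S" and "r \<ge> 0"
    and "\<And>n. x n \<in> X" and "x' \<in> X"
    and "stat_convergent S x x'"
  shows "st_LIM X S r x = S_closed_ball X S x' r"
proof -
  have tri: "\<And>a b c d. a \<in> X \<Longrightarrow> b \<in> X \<Longrightarrow> c \<in> X \<Longrightarrow> d \<in> X \<Longrightarrow> S a b c \<le> S a a d + S b b d + S c c d"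
  proof -
    fix a b c d assume "a \<in> X" "b \<in> X" "c \<in> X" "d \<in> X"
    moreover have "\<forall>x\<in>X. \<forall>y\<in>X. \<forall>z\<in>X. \<forall>a\<in>X. S x y z \<le> S x x a + S y y a + S z z a"
      using assms(1) unfolding S_metric_def by (elim conjE) assumption
    ultimately show "S a b c \<le> S a a d + S b b d + S c c d" by blast
  qed
  have z: "\<And>a. a \<in> X \<Longrightarrow> S a a a = 0"
  proof -
    fix a assume "a \<in> X"
    moreover have "\<forall>x\<in>X. \<forall>y\<in>X. \<forall>z\<in>X. S x y z = 0 \<longleftrightarrow> x = y \<and> y = z"
      using assms(1) unfolding S_metric_def by (elim conjE) assumption
    ultimately show "S a a a = 0" by blast
  qed
  have sym: "\<And>a b. a \<in> X \<Longrightarrow> b \<in> X \<Longrightarrow> S a a b = S b b a"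
  proof -
    fix a b assume ab: "a \<in> X" "b \<in> X"
    have "S a a b \<le> S b b a" using tri[OF ab(1) ab(1) ab(2) ab(1)] z[OF ab(1)] by simp
    moreover have "S b b a \<le> S a a b" using tri[OF ab(2) ab(2) ab(1) ab(2)] z[OF ab(2)] by simp
    ultimately show "S a a b = S b b a" by simp
  qed
  have sc: "\<And>e. e > 0 \<Longrightarrow> has_natural_density {n. 1 \<le> n \<and> S (x n) (x n) x' \<ge> e} 0"
    using assms(5) unfolding stat_convergent_def by blast
  show ?thesis
  proof (rule set_eqI, rule iffI)
    fix y assume "y \<in> st_LIM X S r x"
    then have yX: "y \<in> X" and rc: "\<And>e. e > 0 \<Longrightarrow> has_natural_density {n. 1 \<le> n \<and> S (x n) (x n) y \<ge> r + e} 0"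
      unfolding st_LIM_def r_stat_convergent_def by auto
    have H: "S y y x' \<le> r + 3 * e" if ep: "e > 0" for e
    proof -
      obtain n where n: "n \<ge> 1" "n \<notin> {n. 1 \<le> n \<and> S (x n) (x n) x' \<ge> e} \<union> {n. 1 \<le> n \<and> S (x n) (x n) y \<ge> r + e}"
        using dens_not_all[OF dens_union[OF sc[OF ep] rc[OF ep]]] by blast
      then have a: "S (x n) (x n) x' < e" and b: "S (x n) (x n) y < r + e" by auto
      have "S x' x' y \<le> S x' x' (x n) + S x' x' (x n) + S y y (x n)"
        using tri[OF assms(4) assms(4) yX assms(3)] .
      also have "\<dots> = 2 * S (x n) (x n) x' + S (x n) (x n) y"
        using sym[OF assms(4) assms(3)] sym[OF yX assms(3)] by simp
      finally show ?thesis using a b sym[OF assms(4) yX] by simp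
    qed
    have "S y y x' \<le> r + e" if "e > 0" for e
      using H[of "e/3"] that by simp
    then have "S y y x' \<le> r"
      by (rule field_le_epsilon)
    then show "y \<in> S_closed_ball X S x' r" using yX by (simp add: S_closed_ball_def)
  next
    fix y assume "y \<in> S_closed_ball X S x' r"
    then have yX: "y \<in> X" and yr: "S y y x' \<le> r" by (auto simp: S_closed_ball_def)
    have "has_natural_density {n. 1 \<le> n \<and> S (x n) (x n) y \<ge> r + e} 0" if "e > 0" for e
    proof (rule dens_mono[OF sc[of "e/2"]])
      show "0 < e / 2" using that by simp
      show "{n. 1 \<le> n \<and> r + e \<le> S (x n) (x n) y} \<subseteq> {n. 1 \<le> n \<and> e / 2 \<le> S (x n) (x n) x'}"
      proof safe
        fix n assume "1 \<le> n" "r + e \<le> S (x n) (x n) y"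
        moreover have "S (x n) (x n) y \<le> S (x n) (x n) x' + S (x n) (x n) x' + S y y x'"
          using tri[OF assms(3) assms(3) yX assms(4)] .
        ultimately show "e / 2 \<le> S (x n) (x n) x'" using yr by simp
      qed
    qed
    then show "y \<in> st_LIM X S r x" using yX by (simp add: st_LIM_def r_stat_convergent_def)
  qed
qed

end
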